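(* Let $i,m\in\mathbb{N}$ and $A=(a_0,\dots,a_i)\in\mathbb{N}^*$. Then \[ \begin{pmatrix} p_i & q_i \\ p_{i-1} & q_{i-1}\end{pmatrix} = \begin{pmatrix} \tilde p_i & \tilde p_{i-1} \\ \tilde q_i & \tilde q_{i-1}\end{pmatrix}. \] Furthermore, $A$ is $m$-palindromic if and only if \[ \begin{pmatrix} p_i & m q_i \\ p_{i-1} & q_{i-1}\end{pmatrix} = \begin{pmatrix} \tilde p_i & \tilde q_i \\ m\tilde p_{i-1} & \tilde q_{i-1}\end{pmatrix}. \] Equivalently, $A$ is $m$-palindromic if and only if $m q_i = p_{i-1}$.
   Context: $\mathbb{N}$ denotes the positive integers and $\mathbb{N}^*$ the set of finite sequences of positive integers. For a finite sequence $(a_0,\dots,a_i)$, $[a_0,\dots,a_i]$ denotes the (finite) continued fraction with partial quotients $a_0,\dots,a_i$. For $A=(a_0,\dots,a_i)$, the convergents are $[a_0,\dots,a_k]=p_k/q_k$ in lowest terms ($0\le k\le i$), with $p_{-1}=1$, $q_{-1}=0$; equivalently $\begin{pmatrix} p_i & p_{i-1}\\ q_i & q_{i-1}\end{pmatrix}=\begin{pmatrix} a_0&1\\1&0\end{pmatrix}\cdots\begin{pmatrix} a_i&1\\1&0\end{pmatrix}$. The reversal of $A$ is $\widetilde A=(a_i,\dots,a_0)$, and its convergents are denoted $\tilde p_k/\tilde q_k$ ($0\le k\le i$). A finite sequence $A$ is called $m$-palindromic (an $m$-palindrome) if $[A]=m[\widetilde A]$. *)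

theory Defs
  imports Complex_Main
begin

text \<open>Finite sequences (a_0,...,a_i) of positive integers are nonempty lists of nats
  with all entries > 0. A 2x2 matrix [[a,b],[c,d]] is represented as the tuple (a,b,c,d).\<close>

type_synonym mat2 = "nat \<times> nat \<times> nat \<times> nat"

fun mat2_mult :: "mat2 \<Rightarrow> mat2 \<Rightarrow> mat2" where
  "mat2_mult (a,b,c,d) (e,f,g,h) = (a*e + b*g, a*f + b*h, c*e + d*g, c*f + d*h)"

text \<open>The matrix [[p_i, p_{i-1}],[q_i, q_{i-1}]] = prod_k [[a_k,1],[1,0]];
  for the empty list this is the identity, i.e. (p_{-1}, q_{-1}) = (1, 0).\<close>
fun cf_mat :: "nat list \<Rightarrow> mat2" where
  "cf_mat [] = (1,0,0,1)"
| "cf_mat (a # as) = mat2_mult (a,1,1,0) (cf_mat as)"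

definition cf_p :: "nat list \<Rightarrow> nat" where "cf_p A = fst (cf_mat A)"
definition cf_pprev :: "nat list \<Rightarrow> nat" where "cf_pprev A = fst (snd (cf_mat A))"
definition cf_q :: "nat list \<Rightarrow> nat" where "cf_q A = fst (snd (snd (cf_mat A)))"
definition cf_qprev :: "nat list \<Rightarrow> nat" where "cf_qprev A = snd (snd (snd (cf_mat A)))"

fun cf_val :: "nat list \<Rightarrow> rat" where
  "cf_val [] = 0"
| "cf_val [a] = of_nat a"
| "cf_val (a # as) = of_nat a + 1 / cf_val as"

definition m_palindromic :: "nat \<Rightarrow> nat list \<Rightarrow> bool" where
  "m_palindromic m A \<longleftrightarrow> cf_val A = of_nat m * cf_val (rev A)"

end

theory Submission
  imports Defs
begin

fun tr :: "mat2 \<Rightarrow> mat2" where "tr (a,b,c,d) = (a,c,b,d)"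

lemma mm_assoc: "mat2_mult (mat2_mult x y) z = mat2_mult x (mat2_mult y z)"
  by (cases x; cases y; cases z) (simp add: algebra_simps)

lemma mm_id: "mat2_mult x (1,0,0,1) = x"
  by (cases x) simp

lemma tr_mm: "tr (mat2_mult x y) = mat2_mult (tr y) (tr x)"
  by (cases x; cases y) (simp add: algebra_simps)

lemma cf_mat_snoc: "cf_mat (xs @ [a]) = mat2_mult (cf_mat xs) (a,1,1,0)"
  by (induction xs) (simp_all add: mm_assoc)

lemma cf_mat_rev: "cf_mat (rev xs) = tr (cf_mat xs)"
proof (induction xs)
  case Nil then show ?case by simp
next
  case (Cons a xs)
  have "cf_mat (rev (a#xs)) = mat2_mult (tr (cf_mat xs)) (a,1,1,0)"
    using Cons by (simp add: cf_mat_snoc)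
  also have "\<dots> = tr (mat2_mult (a,1,1,0) (cf_mat xs))" by (simp add: tr_mm)
  finally show ?case by simp
qed

lemma cf_pos: "xs \<noteq> [] \<Longrightarrow> \<forall>a\<in>set xs. a > 0 \<Longrightarrow>
   cf_p xs > 0 \<and> cf_q xs > 0 \<and> cf_pprev xs > 0 \<and> cf_val xs = of_nat (cf_p xs) / of_nat (cf_q xs)"
proof (induction xs)
  case Nil then show ?case by simp
next
  case (Cons a xs)
  obtain P Pp Q Qp where M: "cf_mat xs = (P,Pp,Q,Qp)" by (cases "cf_mat xs") auto
  show ?case
  proof (cases "xs = []")
    case True then show ?thesis using Cons.prems by (simp add: cf_p_def cf_q_def cf_pprev_def)
  next
    case False
    then have IH: "P > 0" "Q > 0" "Pp > 0" "cf_val xs = of_nat P / of_nat Q"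
      using Cons by (auto simp: cf_p_def cf_q_def cf_pprev_def M)
    obtain b ys where xs: "xs = b # ys" using False by (cases xs) auto
    have "cf_val (a#xs) = of_nat a + 1 / cf_val xs" by (simp add: xs)
    also have "\<dots> = (of_nat a * of_nat P + of_nat Q) / of_nat P"
      using IH by (simp only: IH(4)) (simp add: field_simps)
    finally show ?thesis using IH Cons.prems
      by (simp add: cf_p_def cf_q_def cf_pprev_def M)
  qed
qed

theorem lemma3p2:
  fixes A :: "nat list" and i m :: nat
  assumes "i \<ge> 1" and "m \<ge> 1"
    and "length A = i + 1" and "\<forall>a\<in>set A. a > 0"
  shows "((cf_p A, cf_q A, cf_pprev A, cf_qprev A)
           = (cf_p (rev A), cf_pprev (rev A), cf_q (rev A), cf_qprev (rev A)))
    \<and> (m_palindromic m A \<longleftrightarrow>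
           (cf_p A, m * cf_q A, cf_pprev A, cf_qprev A)
           = (cf_p (rev A), cf_q (rev A), m * cf_pprev (rev A), cf_qprev (rev A)))
    \<and> (m_palindromic m A \<longleftrightarrow> m * cf_q A = cf_pprev A)"
proof -
  obtain P Pp Q Qp where M: "cf_mat A = (P,Pp,Q,Qp)" by (cases "cf_mat A") auto
  have R: "cf_mat (rev A) = (P,Q,Pp,Qp)" by (simp add: cf_mat_rev M)
  have ne: "A \<noteq> []" using assms by auto
  from cf_pos[OF ne assms(4)] have H: "P > 0" "Q > 0" "Pp > 0" "cf_val A = of_nat P / of_nat Q"
    by (auto simp: cf_p_def cf_q_def cf_pprev_def M)
  from cf_pos[of "rev A"] ne assms(4) have H2: "cf_val (rev A) = of_nat P / of_nat Pp"
    by (auto simp: cf_p_def cf_q_def cf_pprev_def R)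
  have pal: "m_palindromic m A \<longleftrightarrow> m * Q = Pp"
  proof -
    have "m_palindromic m A \<longleftrightarrow> (of_nat P / of_nat Q :: rat) = of_nat m * (of_nat P / of_nat Pp)"
      by (simp add: m_palindromic_def H H2)
    also have "\<dots> \<longleftrightarrow> (of_nat P * of_nat Pp :: rat) = of_nat m * of_nat P * of_nat Q"
      using H by (simp add: field_simps)
    also have "\<dots> \<longleftrightarrow> (of_nat Pp :: rat) = of_nat (m * Q)"
      using H by (simp add: mult.assoc mult.left_commute)
    also have "\<dots> \<longleftrightarrow> m * Q = Pp" by (simp only: of_nat_eq_iff) auto
    finally show ?thesis .
  qed
  show ?thesis using pal
    by (simp add: cf_p_def cf_q_def cf_pprev_def cf_qprev_def M R) (auto simp: mult.commute)
qed

end
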